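(* For every natural number $\alpha<\omega$ and every $n\in\mathbb N$, $n\ge1$, \[ f_{(\omega^{\omega^\alpha})^n}\in d_{1/2}^{\omega^{1+\alpha}\cdot n}\Big(B_{\ell_1([0,(\omega^{\omega^\alpha})^n])}\Big). \]
   Context: Ordinal arithmetic throughout. For an ordinal $\gamma$, $[0,\gamma]$ has the order topology and $\ell_1([0,\gamma])$ is identified with $C([0,\gamma])^*$ (weak$^*$-topology accordingly). For $\beta\le\gamma$, $f_\beta\in\ell_1([0,\gamma])$ is the indicator of $\{\beta\}$. For a weak$^*$-compact $K$ in a dual $X^*$: $H(x,t)=\{x^*: x^*(x)>t\}$; a weak$^*$-slice of $K$ is a nonempty $H(x,t)\cap K$; $d_\varepsilon K$ is $K$ minus the union of all weak$^*$-slices of $K$ of norm diameter $<\varepsilon$; $d_\varepsilon^0K=K$, $d_\varepsilon^{\beta+1}K=d_\varepsilon(d_\varepsilon^\beta K)$, $d_\varepsilon^\beta K=\bigcap_{\mu<\beta}d_\varepsilon^\mu K$ for limit $\beta$. *)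

theory Defs
  imports "HOL-Analysis.Analysis" "HOL-Library.Multiset_Order"
begin

text \<open>A multiset M over a well-ordered exponent type represents the ordinal
  in Cantor normal form whose exponents (with multiplicity) are the elements of M,
  i.e. the sum of omega^e over e in M in decreasing order.
  The multiset (Dershowitz-Manna) order of Multiset_Order is exactly the ordinal
  order on Cantor normal forms.  Hence nat (= ordinals below omega) encodes
  finite ordinals, nat multiset encodes the ordinals below omega^omega,
  and nat multiset multiset encodes the ordinals below omega^(omega^omega).\<close>

definition omega_pow_times :: "'e \<Rightarrow> nat \<Rightarrow> 'e multiset" where
  "omega_pow_times e n = replicate_mset n e"

definition omega_pow :: "'e \<Rightarrow> 'e multiset" where
  "omega_pow e = {#e#}"

definition is_pred :: "'i::wellorder \<Rightarrow> 'i \<Rightarrow> bool" where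
  "is_pred \<mu> \<beta> \<longleftrightarrow> \<mu> < \<beta> \<and> \<not> (\<exists>\<nu>. \<mu> < \<nu> \<and> \<nu> < \<beta>)"

definition trans_iter :: "('b set \<Rightarrow> 'b set) \<Rightarrow> 'b set \<Rightarrow> 'i::wellorder \<Rightarrow> 'b set" where
  "trans_iter D K = wfrec {(\<mu>, \<beta>). \<mu> < \<beta>}
     (\<lambda>F \<beta>. if \<not> (\<exists>\<mu>. \<mu> < \<beta>) then K
            else if (\<exists>\<mu>. is_pred \<mu> \<beta>) then D (F (THE \<mu>. is_pred \<mu> \<beta>))
            else (\<Inter>\<mu>\<in>{\<mu>. \<mu> < \<beta>}. F \<mu>))"

text \<open>Real-valued continuous functions on [0,gamma] with the order topology:
  each point beta other than 0 has the neighbourhood base (delta, beta], delta < beta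
  (right-hand neighbourhoods of beta can always be chosen as {beta} itself,
  since beta has a successor or is the maximum gamma).\<close>
definition cont_ord :: "'a::wellorder \<Rightarrow> ('a \<Rightarrow> real) \<Rightarrow> bool" where
  "cont_ord \<gamma> x \<longleftrightarrow> (\<forall>\<beta>\<le>\<gamma>. \<forall>e>0. (\<forall>\<delta>. \<not> \<delta> < \<beta>) \<or>
       (\<exists>\<delta><\<beta>. \<forall>\<xi>. \<delta> < \<xi> \<and> \<xi> \<le> \<beta> \<longrightarrow> \<bar>x \<xi> - x \<beta>\<bar> < e))"

definition is_l1 :: "'a::wellorder \<Rightarrow> ('a \<Rightarrow> real) \<Rightarrow> bool" where
  "is_l1 \<gamma> \<mu> \<longleftrightarrow> (\<lambda>\<xi>. \<bar>\<mu> \<xi>\<bar>) summable_on {..\<gamma>} \<and> (\<forall>\<xi>. \<not> \<xi> \<le> \<gamma> \<longrightarrow> \<mu> \<xi> = 0)"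

definition l1norm :: "'a::wellorder \<Rightarrow> ('a \<Rightarrow> real) \<Rightarrow> real" where
  "l1norm \<gamma> \<mu> = (\<Sum>\<^sub>\<infinity>\<xi>\<in>{..\<gamma>}. \<bar>\<mu> \<xi>\<bar>)"

definition pairing :: "'a::wellorder \<Rightarrow> ('a \<Rightarrow> real) \<Rightarrow> ('a \<Rightarrow> real) \<Rightarrow> real" where
  "pairing \<gamma> \<mu> x = (\<Sum>\<^sub>\<infinity>\<xi>\<in>{..\<gamma>}. \<mu> \<xi> * x \<xi>)"

definition dual_ball :: "'a::wellorder \<Rightarrow> ('a \<Rightarrow> real) set" where
  "dual_ball \<gamma> = {\<mu>. is_l1 \<gamma> \<mu> \<and> l1norm \<gamma> \<mu> \<le> 1}"

definition f_ind :: "'a \<Rightarrow> 'a \<Rightarrow> real" where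
  "f_ind \<beta> = (\<lambda>\<xi>. if \<xi> = \<beta> then 1 else 0)"

definition wstar_slice :: "'a::wellorder \<Rightarrow> ('a \<Rightarrow> real) set \<Rightarrow> ('a \<Rightarrow> real) set \<Rightarrow> bool" where
  "wstar_slice \<gamma> K S \<longleftrightarrow> (\<exists>x t. cont_ord \<gamma> x \<and> S = {\<mu>\<in>K. pairing \<gamma> \<mu> x > t}) \<and> S \<noteq> {}"

definition l1diam :: "'a::wellorder \<Rightarrow> ('a \<Rightarrow> real) set \<Rightarrow> ereal" where
  "l1diam \<gamma> S = (SUP p\<in>S \<times> S. ereal (l1norm \<gamma> (\<lambda>\<xi>. fst p \<xi> - snd p \<xi>)))"

definition szlenk_d :: "'a::wellorder \<Rightarrow> real \<Rightarrow> ('a \<Rightarrow> real) set \<Rightarrow> ('a \<Rightarrow> real) set" where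
  "szlenk_d \<gamma> \<epsilon> K = K - \<Union>{S. wstar_slice \<gamma> K S \<and> l1diam \<gamma> S < ereal \<epsilon>}"

definition szlenk_iter :: "'a::wellorder \<Rightarrow> real \<Rightarrow> 'i::wellorder \<Rightarrow> ('a \<Rightarrow> real) set \<Rightarrow> ('a \<Rightarrow> real) set" where
  "szlenk_iter \<gamma> \<epsilon> \<beta> K = trans_iter (szlenk_d \<gamma> \<epsilon>) K \<beta>"

end

theory Submission
  imports Defs
begin


lemma pred_unique: "is_pred \<mu> \<beta> \<Longrightarrow> (THE \<mu>. is_pred \<mu> \<beta>) = (\<mu>::'i::wellorder)"
  unfolding is_pred_def by (rule the_equality) (auto, metis linorder_neqE)+

lemma trans_iter_eq: "trans_iter D K (\<beta>::'i::wellorder) =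
   (if \<not> (\<exists>\<mu>. \<mu> < \<beta>) then K
    else if (\<exists>\<mu>. is_pred \<mu> \<beta>) then D (trans_iter D K (THE \<mu>. is_pred \<mu> \<beta>))
    else (\<Inter>\<mu>\<in>{\<mu>. \<mu> < \<beta>}. trans_iter D K \<mu>))"
proof -
  have w: "wf {(\<mu>, \<beta>). \<mu> < (\<beta>::'i)}" by (rule wf)
  have th: "(THE \<mu>. is_pred \<mu> \<beta>) < \<beta>" if ex: "\<exists>\<mu>. is_pred \<mu> \<beta>"
  proof -
    obtain \<mu> where m: "is_pred \<mu> \<beta>" using ex by blast
    then show ?thesis using pred_unique[OF m] by (simp add: is_pred_def)
  qed
  show ?thesis
    unfolding trans_iter_def
    apply (subst wfrec[OF w])
    using th by (simp add: cut_apply)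
qed

lemma trans_iter_bot: "\<not> (\<exists>\<mu>. \<mu> < \<beta>) \<Longrightarrow> trans_iter D K (\<beta>::'i::wellorder) = K"
  by (subst trans_iter_eq) simp

lemma trans_iter_pred: assumes p: "is_pred \<mu> \<beta>" shows "trans_iter D K (\<beta>::'i::wellorder) = D (trans_iter D K \<mu>)"
proof -
  have a: "\<exists>\<mu>. \<mu> < \<beta>" using p unfolding is_pred_def by blast
  have b: "\<exists>\<mu>. is_pred \<mu> \<beta>" using p by blast
  show ?thesis by (subst trans_iter_eq) (simp only: a b pred_unique[OF p] if_True if_False not_True_eq_False)
qed

lemma trans_iter_lim: assumes a0: "\<mu>0 < \<beta>" and np: "\<not> (\<exists>\<mu>. is_pred \<mu> \<beta>)" shows
   "trans_iter D K (\<beta>::'i::wellorder) = (\<Inter>\<mu>\<in>{\<mu>. \<mu> < \<beta>}. trans_iter D K \<mu>)"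
proof -
  have a: "\<exists>\<mu>. \<mu> < \<beta>" using a0 by blast
  show ?thesis by (subst trans_iter_eq) (simp only: a np if_True if_False not_True_eq_False)
qed

lemma trans_iter_anti:
  assumes sub: "\<And>A. D A \<subseteq> A"
  shows "\<mu> \<le> \<beta> \<Longrightarrow> trans_iter D K (\<beta>::'i::wellorder) \<subseteq> trans_iter D K \<mu>"
proof (induction \<beta> arbitrary: \<mu> rule: less_induct)
  case (less \<beta>)
  show ?case
  proof (cases "\<mu> = \<beta>")
    case True then show ?thesis by simp
  next
    case False
    then have lt: "\<mu> < \<beta>" using less.prems by simp
    show ?thesis
    proof (cases "\<exists>\<nu>. is_pred \<nu> \<beta>")
      case True
      then obtain \<nu> where n: "is_pred \<nu> \<beta>" by blast
      then have nb: "\<nu> < \<beta>" by (simp add: is_pred_def)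
      have "\<mu> \<le> \<nu>"
      proof (rule ccontr)
        assume "\<not> \<mu> \<le> \<nu>"
        then have "\<nu> < \<mu>" by simp
        then show False using lt n unfolding is_pred_def by blast
      qed
      then have "trans_iter D K \<nu> \<subseteq> trans_iter D K \<mu>"
        by (rule less.IH[OF nb])
      moreover have "trans_iter D K \<beta> \<subseteq> trans_iter D K \<nu>"
        unfolding trans_iter_pred[OF n] by (rule sub)
      ultimately show ?thesis by (rule subset_trans[rotated])
    next
      case False
      show ?thesis unfolding trans_iter_lim[OF lt False]
        by (rule INF_lower) (simp add: lt)
    qed
  qed
qed




lemma ge_step:
  fixes \<zeta> H :: "'a::linorder multiset"
  assumes lt: "\<zeta> < H" and z: "\<forall>z\<in>#\<zeta>. e \<le> z" and h: "\<forall>z\<in>#H. e \<le> z"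
  shows "\<zeta> + {#e#} \<le> H"
  unfolding less_eq_multiset\<^sub>H\<^sub>O
proof (intro allI impI)
  fix y assume yc: "count H y < count (\<zeta> + {#e#}) y"
  have cnt: "\<And>w. count (\<zeta> + {#e#}) w = count \<zeta> w + (if w = e then 1 else 0)" by simp
  have HO: "\<forall>y. count H y < count \<zeta> y \<longrightarrow> (\<exists>x>y. count \<zeta> x < count H x)"
    using lt unfolding less_multiset\<^sub>H\<^sub>O by blast
  show "\<exists>x>y. count (\<zeta> + {#e#}) x < count H x"
  proof (cases "count H y < count \<zeta> y")
    case True
    then have "0 < count \<zeta> y" by linarith
    then have "y \<in># \<zeta>" using count_greater_zero_iff by metis
    then have ye: "e \<le> y" using z by blast
    obtain x where x: "x > y" "count \<zeta> x < count H x" using HO True by blast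
    then have "x \<noteq> e" using ye by auto
    then have "count (\<zeta> + {#e#}) x < count H x" using x(2) cnt[of x] by simp
    then show ?thesis using x(1) by blast
  next
    case False
    have ye: "y = e" 
    proof (rule ccontr)
      assume "y \<noteq> e" then show False using yc cnt[of y] False by simp
    qed
    have ceq: "count H e = count \<zeta> e" using yc cnt[of y] False ye by simp
    obtain w where w: "count \<zeta> w < count H w" using lt_imp_ex_count_lt[OF lt] by blast
    then have "0 < count H w" by linarith
    then have "w \<in># H" using count_greater_zero_iff by metis
    then have "e \<le> w" using h by blast
    moreover have "w \<noteq> e" using w ceq by auto
    ultimately have "w > y" using ye by simp
    moreover have "count (\<zeta> + {#e#}) w < count H w" using w cnt[of w] \<open>w \<noteq> e\<close> by simp
    ultimately show ?thesis by blast
  qed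
qed

lemma cnf_below:
  fixes \<delta> \<zeta> :: "'a::linorder multiset"
  assumes z: "\<forall>z\<in>#\<zeta>. e \<le> z" and lt: "\<delta> < \<zeta> + {#e#}"
  shows "\<delta> \<le> \<zeta> + filter_mset (\<lambda>y. y < e) \<delta>"
proof -
  define H where "H = filter_mset (\<lambda>y. \<not> y < e) \<delta>"
  have dH: "\<delta> = H + filter_mset (\<lambda>y. y < e) \<delta>" unfolding H_def by (simp add: multiset_partition add.commute)
  have "H \<le> \<zeta>"
  proof (rule ccontr)
    assume "\<not> H \<le> \<zeta>"
    then have "\<zeta> < H" by simp
    moreover have "\<forall>z\<in>#H. e \<le> z" unfolding H_def by auto
    ultimately have "\<zeta> + {#e#} \<le> H" using ge_step z by blast
    also have "H \<le> \<delta>" using dH by (metis less_eq_multiset_plus_right)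
    finally show False using lt by simp
  qed
  then show ?thesis using dH by (metis add_right_mono)
qed

lemma lt_single: "(\<forall>y\<in>#R. y < x) \<Longrightarrow> R < {#x#}"
  by (rule ex_gt_imp_less_multiset) auto

lemma rep_bound: "(\<forall>y\<in>#R. y \<le> (a::'a::linorder)) \<Longrightarrow> R \<le> replicate_mset (size R) a"
proof (induction R)
  case empty then show ?case by simp
next
  case (add x R)
  have "{#x#} + R \<le> {#a#} + replicate_mset (size R) a"
    using add by (intro add_mono) auto
  then show ?case by simp
qed




lemma fs_infsum:
  fixes g :: "'a \<Rightarrow> real"
  assumes "finite F" "F \<subseteq> A" "\<And>\<xi>. \<xi> \<in> A \<Longrightarrow> \<xi> \<notin> F \<Longrightarrow> g \<xi> = 0"
  shows "infsum g A = sum g F" "g summable_on A"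
proof -
  have "infsum g A = infsum g F"
    by (rule infsum_cong_neutral) (use assms in auto)
  then show "infsum g A = sum g F" using assms(1) by simp
  have "g summable_on F \<longleftrightarrow> g summable_on A"
    by (rule summable_on_cong_neutral) (use assms in auto)
  then show "g summable_on A" using assms(1) by simp
qed

lemma fs_pairing:
  assumes "finite F" "F \<subseteq> {..\<gamma>}" "\<And>\<xi>. \<xi> \<notin> F \<Longrightarrow> \<mu> \<xi> = 0"
  shows "pairing \<gamma> \<mu> x = (\<Sum>\<xi>\<in>F. \<mu> \<xi> * x \<xi>)"
  unfolding pairing_def by (rule fs_infsum(1)) (use assms in auto)

lemma fs_norm:
  assumes "finite F" "F \<subseteq> {..\<gamma>}" "\<And>\<xi>. \<xi> \<notin> F \<Longrightarrow> \<mu> \<xi> = 0"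
  shows "l1norm \<gamma> \<mu> = (\<Sum>\<xi>\<in>F. \<bar>\<mu> \<xi>\<bar>)"
  unfolding l1norm_def by (rule fs_infsum(1)) (use assms in auto)

lemma fs_ball:
  assumes "finite F" "F \<subseteq> {..\<gamma>}" "\<And>\<xi>. \<xi> \<notin> F \<Longrightarrow> \<mu> \<xi> = 0"
    and "(\<Sum>\<xi>\<in>F. \<bar>\<mu> \<xi>\<bar>) \<le> 1"
  shows "\<mu> \<in> dual_ball \<gamma>"
proof -
  have "(\<lambda>\<xi>. \<bar>\<mu> \<xi>\<bar>) summable_on {..\<gamma>}"
    by (rule fs_infsum(2)[of F]) (use assms in auto)
  moreover have "\<forall>\<xi>. \<not> \<xi> \<le> \<gamma> \<longrightarrow> \<mu> \<xi> = 0" using assms(2,3) by auto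
  ultimately show ?thesis unfolding dual_ball_def is_l1_def
    using fs_norm[OF assms(1-3)] assms(4) by simp
qed

definition wcl :: "'a::wellorder \<Rightarrow> ('a \<Rightarrow> real) \<Rightarrow> ('a \<Rightarrow> real) set \<Rightarrow> bool" where
  "wcl \<gamma> \<mu> A \<longleftrightarrow> (\<forall>x t. cont_ord \<gamma> x \<longrightarrow> pairing \<gamma> \<mu> x > t \<longrightarrow> (\<exists>a\<in>A. pairing \<gamma> a x > t))"

lemma szd_sub: "szlenk_d \<gamma> \<epsilon> A \<subseteq> A"
  unfolding szlenk_d_def by blast

lemma sz_anti: "\<mu> \<le> \<beta> \<Longrightarrow> szlenk_iter \<gamma> \<epsilon> (\<beta>::'i::wellorder) K \<subseteq> szlenk_iter \<gamma> \<epsilon> \<mu> K"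
  unfolding szlenk_iter_def by (rule trans_iter_anti[OF szd_sub])

lemma sz_sub: "szlenk_iter \<gamma> \<epsilon> (\<beta>::'i::wellorder) K \<subseteq> K"
proof -
  define b :: 'i where "b = (LEAST x. True)"
  have nb: "\<not> (\<exists>\<mu>. \<mu> < b)" unfolding b_def using not_less_Least[of _ "\<lambda>x. True"] by blast
  have "b \<le> \<beta>" unfolding b_def by (rule Least_le) simp
  then have "szlenk_iter \<gamma> \<epsilon> \<beta> K \<subseteq> szlenk_iter \<gamma> \<epsilon> b K" by (rule sz_anti)
  also have "szlenk_iter \<gamma> \<epsilon> b K = K" unfolding szlenk_iter_def by (rule trans_iter_bot[OF nb])
  finally show ?thesis .
qed

lemma sz_pred: "is_pred \<nu> \<beta> \<Longrightarrow> szlenk_iter \<gamma> \<epsilon> (\<beta>::'i::wellorder) K = szlenk_d \<gamma> \<epsilon> (szlenk_iter \<gamma> \<epsilon> \<nu> K)"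
  unfolding szlenk_iter_def by (rule trans_iter_pred)

lemma sz_lim: "\<mu>0 < \<beta> \<Longrightarrow> \<not> (\<exists>\<mu>. is_pred \<mu> \<beta>) \<Longrightarrow> (\<And>\<nu>. \<nu> < \<beta> \<Longrightarrow> z \<in> szlenk_iter \<gamma> \<epsilon> \<nu> K)
   \<Longrightarrow> z \<in> szlenk_iter \<gamma> \<epsilon> (\<beta>::'i::wellorder) K"
  unfolding szlenk_iter_def by (subst trans_iter_lim) auto

lemma closure_it:
  fixes \<beta> :: "'i::wellorder"
  assumes "A \<subseteq> szlenk_iter \<gamma> \<epsilon> \<beta> K" and mK: "\<mu> \<in> K" and cl: "wcl \<gamma> \<mu> A"
  shows "\<mu> \<in> szlenk_iter \<gamma> \<epsilon> \<beta> K"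
  using assms(1)
proof (induction \<beta> rule: less_induct)
  case (less \<beta>)
  consider (b) "\<not> (\<exists>\<nu>. \<nu> < \<beta>)" | (p) \<nu> where "is_pred \<nu> \<beta>"
    | (l) \<nu>0 where "\<nu>0 < \<beta>" "\<not> (\<exists>\<nu>. is_pred \<nu> \<beta>)" by blast
  then show ?case
  proof cases
    case b
    then show ?thesis unfolding szlenk_iter_def using trans_iter_bot mK by metis
  next
    case p
    have nb: "\<nu> < \<beta>" using p by (simp add: is_pred_def)
    have Ait: "A \<subseteq> szlenk_iter \<gamma> \<epsilon> \<nu> K" by (rule subset_trans[OF less.prems sz_anti]) (use nb in simp)
    have m\<nu>: "\<mu> \<in> szlenk_iter \<gamma> \<epsilon> \<nu> K" by (rule less.IH[OF nb Ait])
    have eq: "szlenk_iter \<gamma> \<epsilon> \<beta> K = szlenk_d \<gamma> \<epsilon> (szlenk_iter \<gamma> \<epsilon> \<nu> K)" by (rule sz_pred[OF p])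
    show ?thesis unfolding eq szlenk_d_def
    proof (intro DiffI m\<nu> notI)
      assume "\<mu> \<in> \<Union> {S. wstar_slice \<gamma> (szlenk_iter \<gamma> \<epsilon> \<nu> K) S \<and> l1diam \<gamma> S < ereal \<epsilon>}"
      then obtain S where S: "\<mu> \<in> S" "wstar_slice \<gamma> (szlenk_iter \<gamma> \<epsilon> \<nu> K) S" "l1diam \<gamma> S < ereal \<epsilon>" by blast
      then obtain x t where xt: "cont_ord \<gamma> x" "S = {\<mu>'\<in>szlenk_iter \<gamma> \<epsilon> \<nu> K. pairing \<gamma> \<mu>' x > t}"
        unfolding wstar_slice_def by blast
      then have "pairing \<gamma> \<mu> x > t" using S(1) by blast
      then obtain a where a: "a \<in> A" "pairing \<gamma> a x > t" using cl xt(1) unfolding wcl_def by blast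
      then have aS: "a \<in> S" using xt Ait by blast
      have "a \<in> szlenk_d \<gamma> \<epsilon> (szlenk_iter \<gamma> \<epsilon> \<nu> K)" using a less.prems eq by auto
      then show False using aS S unfolding szlenk_d_def by blast
    qed
  next
    case l
    show ?thesis
    proof (rule sz_lim[OF l])
      fix \<nu> assume nb: "\<nu> < \<beta>"
      have Ait: "A \<subseteq> szlenk_iter \<gamma> \<epsilon> \<nu> K" by (rule subset_trans[OF less.prems sz_anti]) (use nb in simp)
      show "\<mu> \<in> szlenk_iter \<gamma> \<epsilon> \<nu> K" by (rule less.IH[OF nb Ait])
    qed
  qed
qed

lemma deriv_it:
  fixes \<beta> :: "'i::wellorder"
  assumes Ait: "A \<subseteq> szlenk_iter \<gamma> \<epsilon> \<beta> K" and mK: "\<mu> \<in> K" and cl: "wcl \<gamma> \<mu> A"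
    and far: "\<And>a. a \<in> A \<Longrightarrow> \<epsilon> \<le> l1norm \<gamma> (\<lambda>\<xi>. \<mu> \<xi> - a \<xi>)"
    and p: "is_pred \<beta> \<beta>'"
  shows "\<mu> \<in> szlenk_iter \<gamma> \<epsilon> \<beta>' K"
proof -
  have m\<beta>: "\<mu> \<in> szlenk_iter \<gamma> \<epsilon> \<beta> K" by (rule closure_it[OF Ait mK cl])
  show ?thesis unfolding sz_pred[OF p] szlenk_d_def
  proof (intro DiffI m\<beta> notI)
    assume "\<mu> \<in> \<Union> {S. wstar_slice \<gamma> (szlenk_iter \<gamma> \<epsilon> \<beta> K) S \<and> l1diam \<gamma> S < ereal \<epsilon>}"
    then obtain S where S: "\<mu> \<in> S" "wstar_slice \<gamma> (szlenk_iter \<gamma> \<epsilon> \<beta> K) S" "l1diam \<gamma> S < ereal \<epsilon>" by blast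
    then obtain x t where xt: "cont_ord \<gamma> x" "S = {\<mu>'\<in>szlenk_iter \<gamma> \<epsilon> \<beta> K. pairing \<gamma> \<mu>' x > t}"
      unfolding wstar_slice_def by blast
    then have "pairing \<gamma> \<mu> x > t" using S(1) by blast
    then obtain a where a: "a \<in> A" "pairing \<gamma> a x > t" using cl xt(1) unfolding wcl_def by blast
    then have aS: "a \<in> S" using xt Ait by blast
    have e0: "ereal (l1norm \<gamma> (\<lambda>\<xi>. fst (\<mu>, a) \<xi> - snd (\<mu>, a) \<xi>)) \<le> l1diam \<gamma> S"
      unfolding l1diam_def by (rule SUP_upper) (use aS S(1) in blast)
    then have e1: "ereal (l1norm \<gamma> (\<lambda>\<xi>. \<mu> \<xi> - a \<xi>)) \<le> l1diam \<gamma> S" by simp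
    have e2: "ereal \<epsilon> \<le> ereal (l1norm \<gamma> (\<lambda>\<xi>. \<mu> \<xi> - a \<xi>))" using far[OF a(1)] by simp
    have "ereal \<epsilon> \<le> l1diam \<gamma> S" using order_trans[OF e2 e1] by simp
    then show False using S(3) by simp
  qed
qed




lemma pred_add0: "is_pred (M::nat multiset) (M + {#0#})"
  unfolding is_pred_def
proof (intro conjI notI)
  show "M < M + {#0#}" by (simp add: le_multiset_right_total)
next
  assume "\<exists>\<nu>. M < \<nu> \<and> \<nu> < M + {#0#}"
  then obtain \<nu> where n: "M < \<nu>" "\<nu> < M + {#0#}" by blast
  have "\<nu> \<le> M + filter_mset (\<lambda>y. y < 0) \<nu>" by (rule cnf_below) (use n in auto)
  then show False using n by simp
qed

lemma lim_mset:
  fixes M :: "nat multiset"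
  assumes pos: "\<forall>z\<in>#M. 0 < z" and ne: "M \<noteq> {#}"
  shows "\<not> (\<exists>\<mu>. is_pred \<mu> M)"
proof
  assume "\<exists>\<mu>. is_pred \<mu> M"
  then obtain \<mu> where p: "\<mu> < M" "\<not> (\<exists>\<nu>. \<mu> < \<nu> \<and> \<nu> < M)" unfolding is_pred_def by blast
  define b where "b = Min (set_mset M)"
  have bM: "b \<in># M" unfolding b_def using ne by (simp add: Min_in)
  have bmin: "\<forall>z\<in>#M - {#b#}. b \<le> z" unfolding b_def
    by (meson Min_le finite_set_mset in_diffD)
  have Meq: "M = (M - {#b#}) + {#b#}" using bM by simp
  have b0: "0 < b" using pos bM by blast
  have "\<mu> \<le> (M - {#b#}) + filter_mset (\<lambda>y. y < b) \<mu>"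
    by (rule cnf_below[OF bmin]) (use p Meq in metis)
  also have "\<dots> < (M - {#b#}) + filter_mset (\<lambda>y. y < b) \<mu> + {#0#}"
    by (simp add: le_multiset_right_total)
  finally have l1: "\<mu> < (M - {#b#}) + filter_mset (\<lambda>y. y < b) \<mu> + {#0#}" .
  have "filter_mset (\<lambda>y. y < b) \<mu> + {#0#} < {#b#}"
    by (rule lt_single) (use b0 in auto)
  then have F: "(M - {#b#}) + (filter_mset (\<lambda>y. y < b) \<mu> + {#0#}) < (M - {#b#}) + {#b#}"
    by (rule add_strict_left_mono)
  have eqM: "(M - {#b#}) + {#b#} = M" using bM by simp
  have l2': "(M - {#b#}) + (filter_mset (\<lambda>y. y < b) \<mu> + {#0#}) < M"
    using F[unfolded eqM] .
  have l2: "(M - {#b#}) + filter_mset (\<lambda>y. y < b) \<mu> + {#0#} < M"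
    using l2' by (simp only: add.assoc)
  show False using p l1 l2 by blast
qed

lemma rep_mono: "i \<le> j \<Longrightarrow> replicate_mset i a \<le> replicate_mset j a"
  by (rule subset_eq_imp_le_multiset) (simp add: subseteq_mset_def)

lemma rep_strict: "i < j \<Longrightarrow> replicate_mset i a < replicate_mset j a"
proof -
  assume ij: "i < j"
  have ne: "replicate_mset i a \<noteq> replicate_mset j a"
  proof
    assume "replicate_mset i a = replicate_mset j a"
    then have "count (replicate_mset i a) a = count (replicate_mset j a) a" by simp
    then show False using ij by simp
  qed
  have "replicate_mset i a \<subseteq># replicate_mset j a" using ij by (simp add: subseteq_mset_def)
  then show ?thesis using ne by (simp add: subset_imp_less_mset subset_mset.less_le)
qed




abbreviation IT :: "'a::wellorder \<Rightarrow> nat multiset \<Rightarrow> ('a \<Rightarrow> real) set" where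
  "IT \<gamma> \<beta> \<equiv> szlenk_iter \<gamma> (1/2) \<beta> (dual_ball \<gamma>)"

definition unif :: "'a set \<Rightarrow> 'a \<Rightarrow> real" where
  "unif S = (\<lambda>\<xi>. if \<xi> \<in> S then 1 / real (card S) else 0)"

lemma f_ind_ball: "\<xi> \<le> \<gamma> \<Longrightarrow> f_ind \<xi> \<in> dual_ball \<gamma>"
  by (rule fs_ball[of "{\<xi>}"]) (auto simp: f_ind_def)

lemma f_ind_pair: "\<xi> \<le> \<gamma> \<Longrightarrow> pairing \<gamma> (f_ind \<xi>) x = x \<xi>"
  by (subst fs_pairing[of "{\<xi>}"]) (auto simp: f_ind_def)

lemma unif_sum1: "finite S \<Longrightarrow> S \<noteq> {} \<Longrightarrow> (\<Sum>\<xi>\<in>S. \<bar>unif S \<xi>\<bar>) = 1"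
proof -
  assume f: "finite S" and ne: "S \<noteq> {}"
  have "(\<Sum>\<xi>\<in>S. \<bar>unif S \<xi>\<bar>) = (\<Sum>\<xi>\<in>S. 1 / real (card S))"
    by (rule sum.cong) (auto simp: unif_def)
  also have "\<dots> = 1" using f ne by (simp add: card_gt_0_iff)
  finally show ?thesis .
qed

lemma unif_ball: "finite S \<Longrightarrow> S \<noteq> {} \<Longrightarrow> S \<subseteq> {..\<gamma>} \<Longrightarrow> unif S \<in> dual_ball \<gamma>"
  by (rule fs_ball[of S]) (auto simp: unif_sum1, auto simp: unif_def)

lemma unif_pair: "finite S \<Longrightarrow> S \<subseteq> {..\<gamma>} \<Longrightarrow> pairing \<gamma> (unif S) x = (\<Sum>\<xi>\<in>S. x \<xi>) / real (card S)"
proof -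
  assume f: "finite S" and s: "S \<subseteq> {..\<gamma>}"
  have "pairing \<gamma> (unif S) x = (\<Sum>\<xi>\<in>S. unif S \<xi> * x \<xi>)"
    by (rule fs_pairing) (use f s in \<open>auto simp: unif_def\<close>)
  also have "\<dots> = (\<Sum>\<xi>\<in>S. (1 / real (card S)) * x \<xi>)"
    by (rule sum.cong) (auto simp: unif_def)
  also have "\<dots> = (\<Sum>\<xi>\<in>S. x \<xi>) / real (card S)"
    by (simp add: sum_divide_distrib)
  finally show ?thesis .
qed

lemma unif_single: "unif {s} = f_ind s"
  by (rule ext) (simp add: unif_def f_ind_def)

lemma far1:
  assumes "\<xi> \<le> \<gamma>" "finite S" "S \<subseteq> {..\<gamma>}" "\<xi> \<notin> S"
  shows "1/2 \<le> l1norm \<gamma> (\<lambda>\<eta>. f_ind \<xi> \<eta> - unif S \<eta>)"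
proof -
  have "l1norm \<gamma> (\<lambda>\<eta>. f_ind \<xi> \<eta> - unif S \<eta>) = (\<Sum>\<eta>\<in>insert \<xi> S. \<bar>f_ind \<xi> \<eta> - unif S \<eta>\<bar>)"
    by (rule fs_norm) (use assms in \<open>auto simp: f_ind_def unif_def\<close>)
  also have "\<dots> = \<bar>f_ind \<xi> \<xi> - unif S \<xi>\<bar> + (\<Sum>\<eta>\<in>S. \<bar>f_ind \<xi> \<eta> - unif S \<eta>\<bar>)"
    using assms by simp
  also have "\<dots> \<ge> 1" using assms by (simp add: f_ind_def unif_def sum_nonneg)
  finally show ?thesis by simp
qed

lemma far2:
  assumes "finite S" "T \<subseteq> S" "S \<subseteq> {..\<gamma>}" "card S = 2 * card T" "T \<noteq> {}"
  shows "1/2 \<le> l1norm \<gamma> (\<lambda>\<eta>. unif S \<eta> - unif T \<eta>)"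
proof -
  have fT: "finite T" using assms(1,2) finite_subset by blast
  have cT: "card T > 0" using fT assms(5) by (simp add: card_gt_0_iff)
  have "l1norm \<gamma> (\<lambda>\<eta>. unif S \<eta> - unif T \<eta>) = (\<Sum>\<eta>\<in>S. \<bar>unif S \<eta> - unif T \<eta>\<bar>)"
    by (rule fs_norm) (use assms in \<open>auto simp: unif_def\<close>)
  also have "\<dots> \<ge> (\<Sum>\<eta>\<in>S - T. \<bar>unif S \<eta> - unif T \<eta>\<bar>)"
    by (rule sum_mono2) (use assms in auto)
  also have "(\<Sum>\<eta>\<in>S - T. \<bar>unif S \<eta> - unif T \<eta>\<bar>) = (\<Sum>\<eta>\<in>S - T. 1 / real (card S))"
    by (rule sum.cong) (auto simp: unif_def)
  also have "\<dots> = real (card (S - T)) / real (card S)" by simp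
  also have "card (S - T) = card T" using card_Diff_subset[OF fT assms(2)] assms(4) by simp
  finally show ?thesis using assms(4) cT by simp
qed

lemma halving:
  fixes \<gamma> :: "'a::wellorder" and B :: "nat multiset"
  shows "finite S \<Longrightarrow> card S = 2^k \<Longrightarrow> (\<forall>s\<in>S. s \<le> \<gamma> \<and> f_ind s \<in> IT \<gamma> B)
     \<Longrightarrow> unif S \<in> IT \<gamma> (B + replicate_mset k 0)"
proof (induction k arbitrary: S)
  case 0
  then have "card S = 1" by simp
  then obtain s where "S = {s}" by (rule card_1_singletonE)
  then show ?case using 0 by (simp add: unif_single)
next
  case (Suc k)
  have "2^k \<le> card S" using Suc.prems(2) by simp
  then obtain S1 where S1: "S1 \<subseteq> S" "card S1 = 2^k"
    using obtain_subset_with_card_n by metis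
  define S2 where "S2 = S - S1"
  have fS1: "finite S1" using S1(1) Suc.prems(1) finite_subset by blast
  have fS2: "finite S2" using Suc.prems(1) S2_def by simp
  have cS2: "card S2 = 2^k" unfolding S2_def using card_Diff_subset[OF fS1 S1(1)] S1(2) Suc.prems(2) by simp
  have S2S: "S2 \<subseteq> S" unfolding S2_def by blast
  have dis: "S1 \<inter> S2 = {}" "S = S1 \<union> S2" unfolding S2_def using S1(1) by auto
  have ne1: "S1 \<noteq> {}" using S1(2) by auto
  have ne2: "S2 \<noteq> {}" using cS2 by auto
  have neS: "S \<noteq> {}" using ne1 S1(1) by auto
  have Sg: "S \<subseteq> {..\<gamma>}" using Suc.prems(3) by auto
  have u1: "unif S1 \<in> IT \<gamma> (B + replicate_mset k 0)"
    by (rule Suc.IH[OF fS1 S1(2)]) (use Suc.prems(3) S1(1) in blast)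
  have u2: "unif S2 \<in> IT \<gamma> (B + replicate_mset k 0)"
    by (rule Suc.IH[OF fS2 cS2]) (use Suc.prems(3) S2S in blast)
  have p: "is_pred (B + replicate_mset k 0) (B + replicate_mset (Suc k) 0)"
    using pred_add0[of "B + replicate_mset k 0"] by (simp add: add.assoc)
  show ?case
  proof (rule deriv_it[OF _ unif_ball[OF Suc.prems(1) neS Sg] _ _ p, of "{unif S1, unif S2}"])
    show "{unif S1, unif S2} \<subseteq> IT \<gamma> (B + replicate_mset k 0)" using u1 u2 by blast
  next
    show "wcl \<gamma> (unif S) {unif S1, unif S2}" unfolding wcl_def
    proof (intro allI impI)
      fix x t assume "cont_ord \<gamma> x" and pt: "t < pairing \<gamma> (unif S) x"
      have "pairing \<gamma> (unif S) x = ((\<Sum>\<xi>\<in>S1. x \<xi>) + (\<Sum>\<xi>\<in>S2. x \<xi>)) / real (card S)"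
        using unif_pair[OF Suc.prems(1) Sg] dis fS1 fS2 by (simp add: sum.union_disjoint)
      also have "\<dots> = (pairing \<gamma> (unif S1) x + pairing \<gamma> (unif S2) x) / 2"
        using unif_pair[OF fS1, of \<gamma> x] unif_pair[OF fS2, of \<gamma> x] S1(1) S2S Sg S1(2) cS2 Suc.prems(2)
        by (auto simp: field_simps)
      finally have "t < (pairing \<gamma> (unif S1) x + pairing \<gamma> (unif S2) x) / 2" using pt by simp
      then have "2 * t < pairing \<gamma> (unif S1) x + pairing \<gamma> (unif S2) x" by (simp add: field_simps)
      then have "t < pairing \<gamma> (unif S1) x \<or> t < pairing \<gamma> (unif S2) x" by linarith
      then show "\<exists>a\<in>{unif S1, unif S2}. t < pairing \<gamma> a x" by blast
    qed
  next
    fix a assume "a \<in> {unif S1, unif S2}"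
    then show "1/2 \<le> l1norm \<gamma> (\<lambda>\<xi>. unif S \<xi> - a \<xi>)"
      using far2[OF Suc.prems(1) S1(1) Sg _ ne1] far2[OF Suc.prems(1) S2S Sg _ ne2]
        Suc.prems(2) S1(2) cS2 by auto
  qed
qed

lemma cont_at:
  fixes \<gamma> \<xi> :: "'a::wellorder"
  assumes c: "cont_ord \<gamma> x" and "\<xi> \<le> \<gamma>" "b < \<xi>" "x \<xi> > t"
  shows "\<exists>\<delta><\<xi>. \<forall>\<eta>. \<delta> < \<eta> \<and> \<eta> \<le> \<xi> \<longrightarrow> x \<eta> > t"
proof -
  have "(\<forall>\<delta>. \<not> \<delta> < \<xi>) \<or> (\<exists>\<delta><\<xi>. \<forall>\<eta>. \<delta> < \<eta> \<and> \<eta> \<le> \<xi> \<longrightarrow> \<bar>x \<eta> - x \<xi>\<bar> < x \<xi> - t)"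
    using c assms(2,4) unfolding cont_ord_def by auto
  then obtain \<delta> where d: "\<delta> < \<xi>" "\<forall>\<eta>. \<delta> < \<eta> \<and> \<eta> \<le> \<xi> \<longrightarrow> \<bar>x \<eta> - x \<xi>\<bar> < x \<xi> - t"
    using assms(3) by blast
  show ?thesis
  proof (intro exI conjI allI impI)
    show "\<delta> < \<xi>" by (rule d(1))
    fix \<eta> assume "\<delta> < \<eta> \<and> \<eta> \<le> \<xi>"
    then have "\<bar>x \<eta> - x \<xi>\<bar> < x \<xi> - t" using d(2) by blast
    then show "x \<eta> > t" by linarith
  qed
qed

lemma size_le_sum: "y \<in># R \<Longrightarrow> (f y :: nat) \<le> sum_mset (image_mset f R)"
proof -
  assume "y \<in># R"
  then obtain R' where "R = add_mset y R'" using multi_member_split by metis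
  then show ?thesis by simp
qed




lemma main_claim:
  fixes \<gamma> :: "nat multiset multiset" and e :: "nat multiset"
  shows "\<forall>\<zeta>. (\<forall>z\<in>#\<zeta>. e \<le> z) \<longrightarrow> add_mset e \<zeta> \<le> \<gamma> \<longrightarrow> f_ind (add_mset e \<zeta>) \<in> IT \<gamma> (image_mset Suc e)"
proof (induction e rule: less_induct)
  case (less e)
  show ?case
  proof (intro allI impI)
    fix \<zeta> :: "nat multiset multiset"
    assume zge: "\<forall>z\<in>#\<zeta>. e \<le> z" and xg: "add_mset e \<zeta> \<le> \<gamma>"
    define \<xi> where "\<xi> = add_mset e \<zeta>"
    have xg': "\<xi> \<le> \<gamma>" using xg \<xi>_def by simp
    have fK: "f_ind \<xi> \<in> dual_ball \<gamma>" using f_ind_ball[OF xg'] .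
    have xpos: "{#} < \<xi>" unfolding \<xi>_def by simp
    have xeq: "\<xi> = \<zeta> + {#e#}" unfolding \<xi>_def by simp
    have cont: "\<And>x t. cont_ord \<gamma> x \<Longrightarrow> x \<xi> > t \<Longrightarrow> \<exists>\<delta><\<xi>. \<forall>\<eta>. \<delta> < \<eta> \<and> \<eta> \<le> \<xi> \<longrightarrow> x \<eta> > t"
      using cont_at[OF _ xg' xpos] by blast
    have "f_ind \<xi> \<in> IT \<gamma> (image_mset Suc e)"
    proof (cases "e = {#}")
      case True
      have "\<not> (\<exists>\<mu>. \<mu> < image_mset Suc e)" using True by simp
      then show ?thesis using fK unfolding szlenk_iter_def by (simp add: trans_iter_bot)
    next
      case False
      have lim: "\<not> (\<exists>\<mu>. is_pred \<mu> (image_mset Suc e))" by (rule lim_mset) (use False in auto)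
      have pos: "{#} < image_mset Suc e" using False by simp
      show ?thesis
      proof (rule sz_lim[OF pos lim])
        fix \<nu> assume \<nu>: "\<nu> < image_mset Suc e"
        show "f_ind \<xi> \<in> IT \<gamma> \<nu>"
        proof (cases "0 \<in># e")
          case True
          define e0 where "e0 = e - {#0#}"
          have e_eq: "e = add_mset 0 e0" using True by (simp add: e0_def)
          have e0lt: "e0 < e" using e_eq by (simp add: le_multiset_right_total)
          define B where "B = image_mset Suc e0"
          have phi: "image_mset Suc e = B + {#Suc 0#}" using e_eq B_def by simp
          have Bge: "\<forall>z\<in>#B. Suc 0 \<le> z" by (auto simp: B_def)
          have "\<nu> \<le> B + filter_mset (\<lambda>y. y < Suc 0) \<nu>" by (rule cnf_below[OF Bge]) (use \<nu> phi in simp)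
          moreover have "filter_mset (\<lambda>y. y < Suc 0) \<nu> = replicate_mset (count \<nu> 0) 0"
          proof -
            have "filter_mset (\<lambda>y. y < Suc 0) \<nu> = filter_mset (\<lambda>y. y = 0) \<nu>" by simp
            then show ?thesis by (simp add: filter_eq_replicate_mset)
          qed
          ultimately have "\<nu> \<le> B + replicate_mset (count \<nu> 0) 0" by simp
          also have "\<dots> \<le> B + replicate_mset (Suc (count \<nu> 0)) 0"
            by (rule add_left_mono) (rule rep_mono, simp)
          finally have \<nu>le: "\<nu> \<le> B + replicate_mset (Suc (count \<nu> 0)) 0" .
          define k where "k = count \<nu> 0"
          define \<eta> where "\<eta> = (\<lambda>j::nat. \<zeta> + replicate_mset j e0)"
          have \<eta>lt: "\<eta> j < \<xi>" for j
          proof -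
            have "replicate_mset j e0 < {#e#}" by (rule lt_single) (use e0lt in auto)
            then show ?thesis unfolding \<eta>_def xeq by (rule add_strict_left_mono)
          qed
          have \<eta>mono: "i < j \<Longrightarrow> \<eta> i < \<eta> j" for i j
            unfolding \<eta>_def by (rule add_strict_left_mono) (rule rep_strict)
          have \<eta>good: "f_ind (\<eta> (Suc j)) \<in> IT \<gamma> B" for j
          proof -
            have z': "\<forall>z\<in>#\<zeta> + replicate_mset j e0. e0 \<le> z" using zge e0lt by auto
            have eqj: "add_mset e0 (\<zeta> + replicate_mset j e0) = \<eta> (Suc j)" unfolding \<eta>_def by simp
            have "add_mset e0 (\<zeta> + replicate_mset j e0) \<le> \<gamma>" using eqj \<eta>lt[of "Suc j"] xg' by simp
            then show ?thesis using less.IH[OF e0lt] z' eqj B_def by metis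
          qed
          have cof: "\<exists>J. \<forall>j\<ge>J. \<delta> < \<eta> j" if d: "\<delta> < \<xi>" for \<delta>
          proof -
            define R where "R = filter_mset (\<lambda>y. y < e) \<delta>"
            have d1: "\<delta> \<le> \<zeta> + R" unfolding R_def by (rule cnf_below[OF zge]) (use d xeq in simp)
            have "\<forall>y\<in>#R. y \<le> e0"
            proof
              fix y assume "y \<in># R"
              then have "y < e0 + {#0#}" using e_eq R_def by simp
              then have "y \<le> e0 + filter_mset (\<lambda>y. y < 0) y" by (intro cnf_below) auto
              then show "y \<le> e0" by simp
            qed
            then have "R \<le> replicate_mset (size R) e0" by (rule rep_bound)
            then have "\<delta> \<le> \<eta> (size R)" using d1 unfolding \<eta>_def by (meson add_left_mono order_trans)
            then have "\<forall>j\<ge>Suc (size R). \<delta> < \<eta> j" using \<eta>mono by (meson Suc_le_lessD order_le_less_trans)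
            then show ?thesis by blast
          qed
          have pk: "is_pred (B + replicate_mset k 0) (B + replicate_mset (Suc k) 0)"
            using pred_add0[of "B + replicate_mset k 0"] by (simp add: add.assoc)
          have "f_ind \<xi> \<in> IT \<gamma> (B + replicate_mset (Suc k) 0)"
          proof (rule deriv_it[OF _ fK _ _ pk,
                 of "{unif S | S. finite S \<and> card S = 2^k \<and> (\<forall>s\<in>S. s < \<xi> \<and> s \<le> \<gamma> \<and> f_ind s \<in> IT \<gamma> B)}"])
            show "{unif S | S. finite S \<and> card S = 2^k \<and> (\<forall>s\<in>S. s < \<xi> \<and> s \<le> \<gamma> \<and> f_ind s \<in> IT \<gamma> B)}
                  \<subseteq> IT \<gamma> (B + replicate_mset k 0)"
              using halving by blast
          next
            show "wcl \<gamma> (f_ind \<xi>) {unif S | S. finite S \<and> card S = 2^k \<and> (\<forall>s\<in>S. s < \<xi> \<and> s \<le> \<gamma> \<and> f_ind s \<in> IT \<gamma> B)}"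
              unfolding wcl_def
            proof (intro allI impI)
              fix x t assume cx: "cont_ord \<gamma> x" and pt: "t < pairing \<gamma> (f_ind \<xi>) x"
              then have "x \<xi> > t" using f_ind_pair[OF xg'] by simp
              then obtain \<delta> where d: "\<delta> < \<xi>" "\<forall>\<eta>. \<delta> < \<eta> \<and> \<eta> \<le> \<xi> \<longrightarrow> x \<eta> > t" using cont cx by blast
              obtain J where J: "\<forall>j\<ge>J. \<delta> < \<eta> j" using cof[OF d(1)] by blast
              define S where "S = (\<lambda>j. \<eta> (Suc j)) ` {J..<J+2^k}"
              have inj: "inj_on (\<lambda>j. \<eta> (Suc j)) {J..<J+2^k}"
                by (rule inj_onI) (metis Suc_less_eq \<eta>mono linorder_neqE less_irrefl)
              have fS: "finite S" unfolding S_def by simp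
              have cS: "card S = 2^k" unfolding S_def using card_image[OF inj] by simp
              have sprop: "s < \<xi> \<and> s \<le> \<gamma> \<and> f_ind s \<in> IT \<gamma> B \<and> x s > t" if sS: "s \<in> S" for s
              proof -
                obtain j where j0: "j \<in> {J..<J+2^k}" "s = \<eta> (Suc j)" using sS unfolding S_def by blast
                then have j: "j \<ge> J" "s = \<eta> (Suc j)" by auto
                have "\<delta> < s" using J j by simp
                moreover have "s < \<xi>" using j \<eta>lt by simp
                ultimately show ?thesis using d(2) \<eta>good j xg' by auto
              qed
              have Sg: "S \<subseteq> {..\<gamma>}" using sprop by auto
              have neS: "S \<noteq> {}" using cS by auto
              have "(\<Sum>s\<in>S. t) < (\<Sum>s\<in>S. x s)"
                by (rule sum_strict_mono[OF fS neS]) (use sprop in auto)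
              then have "real (card S) * t < (\<Sum>s\<in>S. x s)" by simp
              then have "t < pairing \<gamma> (unif S) x" using unif_pair[OF fS Sg] neS fS
                by (simp add: card_gt_0_iff pos_less_divide_eq mult.commute)
              moreover have "unif S \<in> {unif S | S. finite S \<and> card S = 2^k \<and> (\<forall>s\<in>S. s < \<xi> \<and> s \<le> \<gamma> \<and> f_ind s \<in> IT \<gamma> B)}"
                using fS cS sprop by blast
              ultimately show "\<exists>a\<in>{unif S | S. finite S \<and> card S = 2^k \<and> (\<forall>s\<in>S. s < \<xi> \<and> s \<le> \<gamma> \<and> f_ind s \<in> IT \<gamma> B)}. t < pairing \<gamma> a x"
                by blast
            qed
          next
            fix a assume "a \<in> {unif S | S. finite S \<and> card S = 2^k \<and> (\<forall>s\<in>S. s < \<xi> \<and> s \<le> \<gamma> \<and> f_ind s \<in> IT \<gamma> B)}"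
            then obtain S where S: "a = unif S" "finite S" "\<forall>s\<in>S. s < \<xi> \<and> s \<le> \<gamma>" by blast
            show "1/2 \<le> l1norm \<gamma> (\<lambda>\<eta>. f_ind \<xi> \<eta> - a \<eta>)"
              unfolding S(1) by (rule far1[OF xg' S(2)]) (use S(3) in auto)
          qed
          then show ?thesis using sz_anti[OF \<nu>le] k_def by blast
        next
          case False
          define a where "a = Min (set_mset e)"
          have ae: "a \<in># e" unfolding a_def using \<open>e \<noteq> {#}\<close> by simp
          have a0: "0 < a" using ae False by (cases a) auto
          define e0 where "e0 = e - {#a#}"
          have e_eq: "e = add_mset a e0" using ae by (simp add: e0_def)
          have e0ge: "\<forall>z\<in>#e0. a \<le> z" unfolding e0_def a_def by (meson Min_le finite_set_mset in_diffD)
          define e' where "e' = (\<lambda>j. e0 + replicate_mset j (a - 1))"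
          have e'lt: "e' j < e" for j
          proof -
            have "replicate_mset j (a - 1) < {#a#}" by (rule lt_single) (use a0 in auto)
            then show ?thesis unfolding e'_def e_eq using add_strict_left_mono[of _ "{#a#}" e0] by simp
          qed
          have phi': "image_mset Suc (e' j) = image_mset Suc e0 + replicate_mset j a" for j
            unfolding e'_def using a0 by simp
          have phi: "image_mset Suc e = image_mset Suc e0 + {#Suc a#}" using e_eq by simp
          have Pge: "\<forall>z\<in>#image_mset Suc e0. Suc a \<le> z" using e0ge by auto
          define R where "R = filter_mset (\<lambda>y. y < Suc a) \<nu>"
          have c1: "\<nu> \<le> image_mset Suc e0 + R" unfolding R_def by (rule cnf_below[OF Pge]) (use \<nu> phi in simp)
          have "R \<le> replicate_mset (size R) a" by (rule rep_bound) (auto simp: R_def)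
          then have c2: "image_mset Suc e0 + R \<le> image_mset Suc e0 + replicate_mset (size R) a" by (rule add_left_mono)
          have \<nu>le: "\<nu> \<le> image_mset Suc (e' (size R))" using order_trans[OF c1 c2] phi' by simp
          define J where "J = size R"
          define A where "A = {f_ind (add_mset (e' j) \<zeta>) | j. J \<le> j}"
          have \<eta>lt: "add_mset (e' j) \<zeta> < \<xi>" for j
          proof -
            have "{#e' j#} < {#e#}" using e'lt[of j] by simp
            then have "\<zeta> + {#e' j#} < \<zeta> + {#e#}" by (rule add_strict_left_mono)
            then show ?thesis by (simp add: \<xi>_def)
          qed
          have "f_ind \<xi> \<in> IT \<gamma> (image_mset Suc (e' J))"
          proof (rule closure_it[OF _ fK])
            show "A \<subseteq> IT \<gamma> (image_mset Suc (e' J))"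
            proof
              fix b assume "b \<in> A"
              then obtain j where j: "J \<le> j" "b = f_ind (add_mset (e' j) \<zeta>)" unfolding A_def by blast
              have "\<forall>z\<in>#\<zeta>. e' j \<le> z" using zge e'lt[of j] by auto
              moreover have "add_mset (e' j) \<zeta> \<le> \<gamma>" using \<eta>lt[of j] xg' by simp
              ultimately have "b \<in> IT \<gamma> (image_mset Suc (e' j))" using less.IH[OF e'lt[of j]] j(2) by blast
              moreover have "image_mset Suc (e' J) \<le> image_mset Suc (e' j)"
                unfolding phi' by (rule add_left_mono) (rule rep_mono[OF j(1)])
              ultimately show "b \<in> IT \<gamma> (image_mset Suc (e' J))" using sz_anti by blast
            qed
          next
            show "wcl \<gamma> (f_ind \<xi>) A" unfolding wcl_def
            proof (intro allI impI)
              fix x t assume cx: "cont_ord \<gamma> x" and pt: "t < pairing \<gamma> (f_ind \<xi>) x"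
              then have "x \<xi> > t" using f_ind_pair[OF xg'] by simp
              then obtain \<delta> where d: "\<delta> < \<xi>" "\<forall>\<eta>. \<delta> < \<eta> \<and> \<eta> \<le> \<xi> \<longrightarrow> x \<eta> > t" using cont cx by blast
              define R' where "R' = filter_mset (\<lambda>y. y < e) \<delta>"
              have d1: "\<delta> \<le> \<zeta> + R'" unfolding R'_def by (rule cnf_below[OF zge]) (use d xeq in simp)
              define N where "N = J + Suc (sum_mset (image_mset size R'))"
              have "\<forall>y\<in>#R'. y < e' N"
              proof
                fix y assume yR: "y \<in># R'"
                then have "y < e0 + {#a#}" using e_eq R'_def by simp
                then have y1: "y \<le> e0 + filter_mset (\<lambda>z. z < a) y" by (rule cnf_below[OF e0ge])
                have "filter_mset (\<lambda>z. z < a) y \<le> replicate_mset (size (filter_mset (\<lambda>z. z < a) y)) (a - 1)"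
                  by (rule rep_bound) auto
                also have "\<dots> \<le> replicate_mset (size y) (a - 1)" by (rule rep_mono) (rule size_filter_mset_lesseq)
                also have "\<dots> < replicate_mset N (a - 1)"
                  by (rule rep_strict) (use size_le_sum[OF yR, of size] in \<open>simp add: N_def\<close>)
                finally have "e0 + filter_mset (\<lambda>z. z < a) y < e' N" unfolding e'_def by (rule add_strict_left_mono)
                then show "y < e' N" using y1 by simp
              qed
              then have "R' < {#e' N#}" by (rule lt_single)
              then have "\<zeta> + R' < \<zeta> + {#e' N#}" by (rule add_strict_left_mono)
              then have "\<delta> < \<zeta> + {#e' N#}" by (rule order_le_less_trans[OF d1])
              then have "\<delta> < add_mset (e' N) \<zeta>" by simp
              moreover have "add_mset (e' N) \<zeta> \<le> \<xi>" using \<eta>lt[of N] by simp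
              ultimately have xt: "x (add_mset (e' N) \<zeta>) > t" using d(2) by blast
              have gN: "add_mset (e' N) \<zeta> \<le> \<gamma>" using \<eta>lt[of N] xg' by simp
              have "t < pairing \<gamma> (f_ind (add_mset (e' N) \<zeta>)) x" using xt f_ind_pair[OF gN, of x] by simp
              moreover have "f_ind (add_mset (e' N) \<zeta>) \<in> A" unfolding A_def N_def by auto
              ultimately show "\<exists>b\<in>A. t < pairing \<gamma> b x" by blast
            qed
          qed
          then show ?thesis using sz_anti[OF \<nu>le] J_def by blast
        qed
      qed
    qed
    then show "f_ind (add_mset e \<zeta>) \<in> IT \<gamma> (image_mset Suc e)" unfolding \<xi>_def .
  qed
qed

theorem mainTheorem9:
  fixes \<alpha> n :: nat
  assumes "n \<ge> 1"
  defines "\<gamma> \<equiv> omega_pow (omega_pow_times \<alpha> n) :: nat multiset multiset"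
  shows "f_ind \<gamma> \<in> szlenk_iter \<gamma> (1/2) (omega_pow_times (Suc \<alpha>) n :: nat multiset) (dual_ball \<gamma>)"
proof -
  have "f_ind (add_mset (replicate_mset n \<alpha>) {#}) \<in> IT \<gamma> (image_mset Suc (replicate_mset n \<alpha>))"
    using main_claim[of "replicate_mset n \<alpha>" \<gamma>] unfolding \<gamma>_def omega_pow_def omega_pow_times_def by simp
  then show ?thesis unfolding \<gamma>_def omega_pow_def omega_pow_times_def by simp
qed


end
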